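(* Let $S_X,S_Y$ be finite nonempty action sets and $\varphi:S_X\times S_Y\to\mathbb{R}$. Suppose $\varphi\equiv0$ is enforceable with $\lambda_{\min}=1$, i.e., there is a $(\varphi,1)$-autocratic behavioral strategy for $X$ but no $(\varphi,\lambda)$-autocratic behavioral strategy for any $\lambda\in[0,1)$. Then there exist $\tau_X^+,\tau_X^-\in\Delta(S_X)$ such that $$\max_{s_Y}\varphi(\tau_X^+,s_Y)>\min_{s_Y}\varphi(\tau_X^+,s_Y)=0=\max_{s_Y}\varphi(\tau_X^-,s_Y)>\min_{s_Y}\varphi(\tau_X^-,s_Y),$$ with maxima and minima over $s_Y\in S_Y$.
   Context: Two players $X,Y$ play a repeated game with finite action sets $S_X,S_Y$; $\Delta(S)$ denotes the probability distributions on $S$; $\varphi(\tau_X,s_Y)=\mathbb{E}_{s_X\sim\tau_X}[\varphi(s_X,s_Y)]$. Histories: $\mathcal{H}=\bigcup_{T\ge0}(S_X\times S_Y)^T$; behavioral strategies are maps $\sigma:\mathcal{H}\to\Delta(S)$; players independently draw actions each round from their strategies evaluated at the history of realized action pairs, with $\mathbb{E}_{\sigma_X,\sigma_Y}$ the expectation over the resulting play. For $\lambda\in[0,1)$, $\sigma_X$ is $(\varphi,\lambda)$-autocratic if for every behavioral strategy $\sigma_Y$, $\mathbb{E}_{\sigma_X,\sigma_Y}[(1-\lambda)\sum_{t\ge0}\lambda^t\varphi(s_X^t,s_Y^t)]=0$; it is $(\varphi,1)$-autocratic if for every $\sigma_Y$ the limit $\lim_{T\to\infty}\frac1{T+1}\sum_{t=0}^T\mathbb{E}_{\sigma_X,\sigma_Y}[\varphi(s_X^t,s_Y^t)]$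 exists and equals $0$. *)

theory Defs
  imports "HOL-Probability.Probability"
begin

type_synonym ('x, 'y) history = "('x \<times> 'y) list"

primrec play :: "(('x, 'y) history \<Rightarrow> 'x pmf) \<Rightarrow> (('x, 'y) history \<Rightarrow> 'y pmf)
    \<Rightarrow> nat \<Rightarrow> ('x, 'y) history pmf" where
  "play sX sY 0 = return_pmf []"
| "play sX sY (Suc t) =
     bind_pmf (play sX sY t) (\<lambda>h. map_pmf (\<lambda>ab. h @ [ab]) (pair_pmf (sX h) (sY h)))"

text \<open>Expected stage payoff in round t (rounds indexed from 0).\<close>
definition stage_exp :: "('x \<Rightarrow> 'y \<Rightarrow> real) \<Rightarrow> (('x, 'y) history \<Rightarrow> 'x pmf)
    \<Rightarrow> (('x, 'y) history \<Rightarrow> 'y pmf) \<Rightarrow> nat \<Rightarrow> real" where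
  "stage_exp \<phi> sX sY t =
     measure_pmf.expectation (play sX sY (Suc t)) (\<lambda>h. \<phi> (fst (last h)) (snd (last h)))"

definition autocratic :: "('x \<Rightarrow> 'y \<Rightarrow> real) \<Rightarrow> real \<Rightarrow> (('x, 'y) history \<Rightarrow> 'x pmf) \<Rightarrow> bool" where
  "autocratic \<phi> lam sX \<longleftrightarrow>
     (if lam < 1 then
        (\<forall>sY. (1 - lam) * (\<Sum>t. lam ^ t * stage_exp \<phi> sX sY t) = 0)
      else
        (\<forall>sY. (\<lambda>T. (\<Sum>t\<le>T. stage_exp \<phi> sX sY t) / real (T + 1)) \<longlonglongrightarrow> 0))"

definition mixed_payoff :: "('x \<Rightarrow> 'y \<Rightarrow> real) \<Rightarrow> 'x pmf \<Rightarrow> 'y \<Rightarrow> real" where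
  "mixed_payoff \<phi> \<tau> y = measure_pmf.expectation \<tau> (\<lambda>x. \<phi> x y)"

end

theory Submission
  imports Defs
begin

lemma mp_sum:
  fixes \<phi> :: "'x::finite \<Rightarrow> 'y \<Rightarrow> real"
  shows "mixed_payoff \<phi> \<tau> y = (\<Sum>x\<in>UNIV. \<phi> x y * pmf \<tau> x)"
  unfolding mixed_payoff_def
  by (rule integral_measure_pmf_real) auto

lemma mk_pmf:
  fixes p :: "'x::finite \<Rightarrow> real"
  assumes "\<And>x. 0 \<le> p x" "sum p UNIV = 1"
  shows "\<exists>\<tau>. \<forall>x. pmf \<tau> x = p x"
proof -
  have "(\<integral>\<^sup>+x. ennreal (p x) \<partial>count_space UNIV) = 1"
    using assms by (simp add: nn_integral_count_space_finite)
  then show ?thesis using pmf_embed_pmf[of p] assms by blast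
qed

lemma pair_exp:
  fixes \<phi> :: "'x::finite \<Rightarrow> 'y::finite \<Rightarrow> real"
  shows "measure_pmf.expectation (pair_pmf A B) (\<lambda>ab. \<phi> (fst ab) (snd ab))
     = (\<Sum>b\<in>UNIV. pmf B b * mixed_payoff \<phi> A b)"
proof -
  have "measure_pmf.expectation (pair_pmf A B) (\<lambda>ab. \<phi> (fst ab) (snd ab))
     = (\<Sum>ab\<in>UNIV. \<phi> (fst ab) (snd ab) * pmf (pair_pmf A B) ab)"
    by (rule integral_measure_pmf_real) auto
  also have "\<dots> = (\<Sum>ab\<in>UNIV. \<phi> (fst ab) (snd ab) * (pmf A (fst ab) * pmf B (snd ab)))"
    by (intro sum.cong refl) (metis pmf_pair prod.collapse)
  also have "\<dots> = (\<Sum>a\<in>UNIV. \<Sum>b\<in>UNIV. \<phi> a b * (pmf A a * pmf B b))"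
    by (subst UNIV_Times_UNIV[symmetric], subst sum.cartesian_product) (simp add: split_beta)
  also have "\<dots> = (\<Sum>b\<in>UNIV. \<Sum>a\<in>UNIV. \<phi> a b * (pmf A a * pmf B b))"
    by (rule sum.swap)
  also have "\<dots> = (\<Sum>b\<in>UNIV. pmf B b * mixed_payoff \<phi> A b)"
    by (simp add: mp_sum sum_distrib_left mult_ac)
  finally show ?thesis .
qed

lemma play_finite:
  fixes sX :: "('x::finite, 'y::finite) history \<Rightarrow> 'x pmf"
  shows "finite (set_pmf (play sX sY t))"
proof (induction t)
  case 0 then show ?case by simp
next
  case (Suc t)
  have "\<And>h. finite (set_pmf (map_pmf (\<lambda>ab. h @ [ab]) (pair_pmf (sX h) (sY h))))"
    by (simp add: finite_subset[OF subset_UNIV])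
  then show ?case using Suc by simp
qed

lemma stage_exp_eq:
  fixes \<phi> :: "'x::finite \<Rightarrow> 'y::finite \<Rightarrow> real"
  shows "stage_exp \<phi> sX sY t = (\<Sum>h\<in>set_pmf (play sX sY t). pmf (play sX sY t) h *
      (\<Sum>b\<in>UNIV. pmf (sY h) b * mixed_payoff \<phi> (sX h) b))"
proof -
  have "stage_exp \<phi> sX sY t = (\<Sum>h\<in>set_pmf (play sX sY t). pmf (play sX sY t) h *\<^sub>R
     measure_pmf.expectation (map_pmf (\<lambda>ab. h @ [ab]) (pair_pmf (sX h) (sY h)))
        (\<lambda>h. \<phi> (fst (last h)) (snd (last h))))"
    unfolding stage_exp_def play.simps
    by (rule pmf_expectation_bind) (auto simp: play_finite finite_subset[OF subset_UNIV])
  also have "\<dots> = (\<Sum>h\<in>set_pmf (play sX sY t). pmf (play sX sY t) h *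
      (\<Sum>b\<in>UNIV. pmf (sY h) b * mixed_payoff \<phi> (sX h) b))"
    by (simp add: pair_exp[symmetric])
  finally show ?thesis .
qed


lemma compact_bound:
  fixes \<phi> :: "'x::finite \<Rightarrow> 'y::finite \<Rightarrow> real"
  assumes neg: "\<forall>\<tau>. \<exists>y. mixed_payoff \<phi> \<tau> y < 0"
  shows "\<exists>c<0. \<forall>\<tau>. \<exists>y. mixed_payoff \<phi> \<tau> y \<le> c"
proof (rule ccontr)
  assume H: "\<not> ?thesis"
  then have "\<forall>n::nat. \<exists>\<tau>. \<forall>y. mixed_payoff \<phi> \<tau> y > - 1 / real (Suc n)"
  proof (intro allI)
    fix n :: nat
    have "- 1 / real (Suc n) < 0" by simp
    with H show "\<exists>\<tau>. \<forall>y. mixed_payoff \<phi> \<tau> y > - 1 / real (Suc n)"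
      by (auto simp: not_le)
  qed
  then obtain T where T: "\<And>n y. mixed_payoff \<phi> (T n) y > - 1 / real (Suc n)"
    by metis
  define v :: "nat \<Rightarrow> real^'x" where "v n = (\<chi> x. pmf (T n) x)" for n
  have "\<forall>n. norm (v n) \<le> 1"
  proof
    fix n
    have "norm (v n) \<le> (\<Sum>x\<in>UNIV. \<bar>v n $ x\<bar>)" by (rule norm_le_l1_cart)
    also have "\<dots> = (\<Sum>x\<in>UNIV. pmf (T n) x)" by (simp add: v_def)
    also have "\<dots> = 1" by (rule sum_pmf_eq_1) auto
    finally show "norm (v n) \<le> 1" .
  qed
  then have "bounded (range v)" unfolding bounded_iff by blast
  then obtain l r where r: "strict_mono r" and lim: "(v \<circ> r) \<longlonglongrightarrow> l"
    using bounded_imp_convergent_subsequence by blast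
  have comp: "(\<lambda>n. pmf (T (r n)) x) \<longlonglongrightarrow> l $ x" for x
    using tendsto_vec_nth[OF lim, of x] by (simp add: v_def o_def)
  have nn: "0 \<le> l $ x" for x
    by (rule LIMSEQ_le_const[OF comp]) auto
  have "(\<lambda>n. \<Sum>x\<in>UNIV. pmf (T (r n)) x) \<longlonglongrightarrow> (\<Sum>x\<in>UNIV. l $ x)"
    by (intro tendsto_sum comp)
  moreover have "(\<lambda>n. \<Sum>x\<in>UNIV. pmf (T (r n)) x) = (\<lambda>n. 1)"
    by (rule ext, rule sum_pmf_eq_1) auto
  ultimately have s1: "(\<Sum>x\<in>UNIV. l $ x) = 1"
    using LIMSEQ_unique tendsto_const by metis
  obtain \<tau> where \<tau>: "\<And>x. pmf \<tau> x = l $ x"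
    using mk_pmf[of "\<lambda>x. l $ x"] nn s1 by blast
  obtain y where y: "mixed_payoff \<phi> \<tau> y < 0" using neg by blast
  have L: "(\<lambda>n. mixed_payoff \<phi> (T (r n)) y) \<longlonglongrightarrow> mixed_payoff \<phi> \<tau> y"
    unfolding mp_sum \<tau> by (intro tendsto_sum tendsto_mult_left comp)
  have L0: "(\<lambda>n. - inverse (real (Suc n))) \<longlonglongrightarrow> 0"
    using tendsto_minus[OF LIMSEQ_inverse_real_of_nat] by simp
  have "- inverse (real (Suc n)) \<le> mixed_payoff \<phi> (T (r n)) y" for n
  proof -
    have "n \<le> r n" using seq_suble[OF r] .
    then have "inverse (real (Suc (r n))) \<le> inverse (real (Suc n))"
      by (simp add: le_imp_inverse_le)
    moreover have "- 1 / real (Suc (r n)) < mixed_payoff \<phi> (T (r n)) y" by (rule T)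
    moreover have "- 1 / real (Suc (r n)) = - inverse (real (Suc (r n)))"
      by (simp add: divide_inverse)
    ultimately show ?thesis by linarith
  qed
  then have "0 \<le> mixed_payoff \<phi> \<tau> y"
    by (intro tendsto_le[OF _ L L0]) auto
  then show False using y by simp
qed

lemma autocratic1_nonneg:
  fixes \<phi> :: "'x::finite \<Rightarrow> 'y::finite \<Rightarrow> real"
  assumes A: "autocratic \<phi> 1 sX"
  shows "\<exists>\<tau>. \<forall>y. mixed_payoff \<phi> \<tau> y \<ge> 0"
proof (rule ccontr)
  assume "\<not> ?thesis"
  then have "\<forall>\<tau>. \<exists>y. mixed_payoff \<phi> \<tau> y < 0" by (auto simp: not_le)
  then obtain c where c: "c < 0" "\<And>\<tau>. \<exists>y. mixed_payoff \<phi> \<tau> y \<le> c"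
    using compact_bound by blast
  define sY :: "('x, 'y) history \<Rightarrow> 'y pmf" where
    "sY h = return_pmf (SOME y. mixed_payoff \<phi> (sX h) y \<le> c)" for h
  have bnd: "mixed_payoff \<phi> (sX h) (SOME y. mixed_payoff \<phi> (sX h) y \<le> c) \<le> c" for h
    using someI_ex[OF c(2)[of "sX h"]] .
  have st: "stage_exp \<phi> sX sY t \<le> c" for t
  proof -
    have "stage_exp \<phi> sX sY t = (\<Sum>h\<in>set_pmf (play sX sY t). pmf (play sX sY t) h *
      mixed_payoff \<phi> (sX h) (SOME y. mixed_payoff \<phi> (sX h) y \<le> c))"
      unfolding stage_exp_eq by (simp add: sY_def pmf_return indicator_def)
    also have "\<dots> \<le> (\<Sum>h\<in>set_pmf (play sX sY t). pmf (play sX sY t) h * c)"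
      by (intro sum_mono mult_left_mono bnd) auto
    also have "\<dots> = c"
      using sum_pmf_eq_1[OF play_finite order_refl, of sX sY t]
      by (simp add: sum_distrib_right[symmetric])
    finally show ?thesis .
  qed
  have avg: "(\<Sum>t\<le>T. stage_exp \<phi> sX sY t) / real (T + 1) \<le> c" for T
  proof -
    have "(\<Sum>t\<le>T. stage_exp \<phi> sX sY t) \<le> (\<Sum>t\<le>T. c)" by (intro sum_mono st)
    then have "(\<Sum>t\<le>T. stage_exp \<phi> sX sY t) \<le> real (T + 1) * c" by simp
    then show ?thesis by (simp add: divide_le_eq mult.commute)
  qed
  from A have "(\<lambda>T. (\<Sum>t\<le>T. stage_exp \<phi> sX sY t) / real (T + 1)) \<longlonglongrightarrow> 0"
    by (simp add: autocratic_def)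
  then have "0 \<le> c" by (rule LIMSEQ_le_const2) (use avg in auto)
  then show False using c by simp
qed

lemma autocratic1_neg:
  fixes \<phi> :: "'x::finite \<Rightarrow> 'y::finite \<Rightarrow> real"
  assumes A: "autocratic \<phi> 1 sX"
  shows "autocratic (\<lambda>x y. - \<phi> x y) 1 sX"
proof -
  have e: "stage_exp (\<lambda>x y. - \<phi> x y) sX sY t = - stage_exp \<phi> sX sY t" for sY t
    unfolding stage_exp_def by simp
  show ?thesis using A unfolding autocratic_def
    by (simp add: e sum_negf) (metis (no_types) minus_divide_left tendsto_minus neg_0_equal_iff_equal)
qed

lemma mp_neg: "mixed_payoff (\<lambda>x y. - \<phi> x y) \<tau> y = - mixed_payoff \<phi> \<tau> y"
  unfolding mixed_payoff_def by simp

lemma zero_autocratic: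
  fixes \<phi> :: "'x::finite \<Rightarrow> 'y::finite \<Rightarrow> real"
  assumes Z: "\<forall>y. mixed_payoff \<phi> \<tau> y = 0"
  shows "autocratic \<phi> 0 (\<lambda>_. \<tau>)"
proof -
  have "stage_exp \<phi> (\<lambda>_. \<tau>) sY 0 = 0" for sY
    unfolding stage_exp_eq using Z by simp
  then have "(\<lambda>t. 0 ^ t * stage_exp \<phi> (\<lambda>_. \<tau>) sY t) = (\<lambda>t. 0)" for sY
    by (auto simp: power_0_left)
  then show ?thesis unfolding autocratic_def by simp
qed


lemma continuous_Min:
  fixes f :: "'y \<Rightarrow> real \<Rightarrow> real"
  assumes "finite F" "F \<noteq> {}" "\<And>y. y \<in> F \<Longrightarrow> continuous_on S (f y)"
  shows "continuous_on S (\<lambda>t. Min ((\<lambda>y. f y t) ` F))"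
  using assms
proof (induction F rule: finite_ne_induct)
  case (singleton y) then show ?case by simp
next
  case (insert y F)
  have "(\<lambda>t. Min ((\<lambda>y. f y t) ` insert y F)) = (\<lambda>t. min (f y t) (Min ((\<lambda>y. f y t) ` F)))"
    using insert by (auto simp: Min_insert)
  then show ?case using insert by (simp add: continuous_on_min)
qed

lemma ivt_min:
  fixes \<phi> :: "'x::finite \<Rightarrow> 'y::finite \<Rightarrow> real"
  assumes HA: "\<forall>y. mixed_payoff \<phi> A y \<ge> 0" and HB: "\<forall>y. mixed_payoff \<phi> B y \<le> 0"
  shows "\<exists>\<tau>. Min (range (mixed_payoff \<phi> \<tau>)) = 0"
proof -
  define g where "g t y = t * mixed_payoff \<phi> A y + (1 - t) * mixed_payoff \<phi> B y" for t y
  define M where "M t = Min ((\<lambda>y. g t y) ` UNIV)" for t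
  have cont: "continuous_on {0..1} M"
    unfolding M_def by (intro continuous_Min) (auto simp: g_def intro!: continuous_intros)
  have "M 0 \<le> 0" using HB by (auto simp: M_def g_def Min_le_iff)
  moreover have "0 \<le> M 1" using HA by (auto simp: M_def g_def Min_ge_iff)
  ultimately obtain t where t: "0 \<le> t" "t \<le> 1" "M t = 0"
    using IVT'[of M 0 0 1] cont by auto
  define p where "p x = t * pmf A x + (1 - t) * pmf B x" for x
  have pn: "0 \<le> p x" for x using t by (simp add: p_def)
  have "sum p UNIV = t * sum (pmf A) UNIV + (1 - t) * sum (pmf B) UNIV"
    by (simp add: p_def sum.distrib sum_distrib_left)
  also have "\<dots> = 1" by (simp add: sum_pmf_eq_1)
  finally obtain \<tau> where \<tau>: "\<And>x. pmf \<tau> x = p x" using mk_pmf[of p] pn by blast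
  have "mixed_payoff \<phi> \<tau> y = g t y" for y
  proof -
    have "mixed_payoff \<phi> \<tau> y = (\<Sum>x\<in>UNIV. \<phi> x y * p x)" by (simp add: mp_sum \<tau>)
    also have "\<dots> = (\<Sum>x\<in>UNIV. t * (\<phi> x y * pmf A x) + (1 - t) * (\<phi> x y * pmf B x))"
      by (intro sum.cong refl) (simp add: p_def algebra_simps)
    also have "\<dots> = g t y" by (simp add: g_def mp_sum sum.distrib sum_distrib_left)
    finally show ?thesis .
  qed
  then have "range (mixed_payoff \<phi> \<tau>) = (\<lambda>y. g t y) ` UNIV" by auto
  then have "Min (range (mixed_payoff \<phi> \<tau>)) = 0" using t by (simp add: M_def)
  then show ?thesis by blast
qed

lemma Min_neg:
  fixes f :: "'y::finite \<Rightarrow> real"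
  shows "Min (range (\<lambda>y. - f y)) = - Max (range f)"
proof -
  have "Max (range f) \<in> range f" by (rule Max_in) auto
  then obtain y0 where y0: "f y0 = Max (range f)" by (metis rangeE)
  show ?thesis
    by (rule Min_eqI) (auto intro: image_eqI[where x=y0] simp: y0)
qed

lemma Min_Max_bounds:
  fixes f :: "'y::finite \<Rightarrow> real"
  shows "Min (range f) \<le> f y" "f y \<le> Max (range f)"
  by auto

theorem lemma4:
  fixes \<phi> :: "'x::finite \<Rightarrow> 'y::finite \<Rightarrow> real"
  assumes "\<exists>sX. autocratic \<phi> 1 sX"
    and "\<forall>lam. 0 \<le> lam \<and> lam < 1 \<longrightarrow> \<not> (\<exists>sX. autocratic \<phi> lam sX)"
  shows "\<exists>\<tau>p \<tau>m :: 'x pmf.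
     (MAX y. mixed_payoff \<phi> \<tau>p y) > (MIN y. mixed_payoff \<phi> \<tau>p y)
   \<and> (MIN y. mixed_payoff \<phi> \<tau>p y) = 0
   \<and> (MAX y. mixed_payoff \<phi> \<tau>m y) = 0
   \<and> (MAX y. mixed_payoff \<phi> \<tau>m y) > (MIN y. mixed_payoff \<phi> \<tau>m y)"
proof -
  obtain sX where sX: "autocratic \<phi> 1 sX" using assms(1) by blast
  obtain A where A: "\<forall>y. mixed_payoff \<phi> A y \<ge> 0"
    using autocratic1_nonneg[OF sX] by blast
  obtain B where B0: "\<forall>y. mixed_payoff (\<lambda>x y. - \<phi> x y) B y \<ge> 0"
    using autocratic1_nonneg[OF autocratic1_neg[OF sX]] by blast
  then have B: "\<forall>y. mixed_payoff \<phi> B y \<le> 0" by (simp add: mp_neg)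
  have notz: "\<not> (\<forall>y. mixed_payoff \<phi> \<tau> y = 0)" for \<tau>
    using zero_autocratic[of \<phi> \<tau>] assms(2) by auto
  obtain tp where tp: "Min (range (mixed_payoff \<phi> tp)) = 0"
    using ivt_min[OF A B] by blast
  obtain tm where tm0: "Min (range (mixed_payoff (\<lambda>x y. - \<phi> x y) tm)) = 0"
    using ivt_min[of "\<lambda>x y. - \<phi> x y" B A] B0 A by (auto simp: mp_neg)
  have e: "mixed_payoff (\<lambda>x y. - \<phi> x y) tm = (\<lambda>y. - mixed_payoff \<phi> tm y)"
    by (rule ext) (rule mp_neg)
  have tm: "Max (range (mixed_payoff \<phi> tm)) = 0"
    using tm0 Min_neg[of "mixed_payoff \<phi> tm"] unfolding e by linarith
  have p1: "Max (range (mixed_payoff \<phi> tp)) > 0"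
  proof (rule ccontr)
    assume "\<not> ?thesis"
    then have "\<forall>y. mixed_payoff \<phi> tp y = 0"
      using tp Min_Max_bounds[of "mixed_payoff \<phi> tp"] by (metis antisym not_le order_trans)
    then show False using notz by blast
  qed
  have m1: "Min (range (mixed_payoff \<phi> tm)) < 0"
  proof (rule ccontr)
    assume "\<not> ?thesis"
    then have "\<forall>y. mixed_payoff \<phi> tm y = 0"
      using tm Min_Max_bounds[of "mixed_payoff \<phi> tm"] by (metis antisym not_le order_trans)
    then show False using notz by blast
  qed
  show ?thesis
    by (rule exI[of _ tp], rule exI[of _ tm]) (use tp tm p1 m1 in auto)
qed

end
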